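(* Let $f:\mathbb{R}^n\to\mathbb{R}$ be convex, with the constants $L_{i,j}$ and $L_j$ as in the context. Then for any $j\in\{1,\dots,n\}$ and all $x',x''\in\mathcal F$, \[ \bigl\|[\nabla f(x')-\nabla_j f(x')e]-[\nabla f(x'')-\nabla_j f(x'')e]\bigr\|_{\langle j\rangle} \le L_j\,\|x'-x''\|_{\langle j\rangle}. \]
   Context: $n\ge2$; $\mathcal F=\{x\in\mathbb{R}^n: e^Tx=b,\ l_i\le x_i\le u_i\}$ with $e$ the all-ones vector, $b\in\mathbb{R}$, $l_i\in\mathbb{R}\cup\{-\infty\}$, $u_i\in\mathbb{R}\cup\{+\infty\}$, $l_i<u_i$. $f$ is continuously differentiable with Lipschitz continuous gradient on $\mathbb{R}^n$. For $i\ne j$, $L_{i,j}>0$ are constants such that for every $x\in\mathbb{R}^n$ and $s,t\in\mathbb{R}$, $|\nabla f(x+s(e_i-e_j))^T(e_i-e_j)-\nabla f(x+t(e_i-e_j))^T(e_i-e_j)|\le L_{i,j}|s-t|$ ($e_i$ the $i$th unit vector); $L_{i,i}=0$. $L_j=\sum_{i=1}^nL_{i,j}$. For $j$ fixed, $\langle x,y\rangle_j=\sum_{i\ne j}x_iy_i$ and $\|x\|_{\langle j\rangle}=\sqrt{\langle x,x\rangle_j}$. *)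

theory Defs
  imports "HOL-Analysis.Analysis" "HOL-Library.Extended_Real"
begin

definition ones :: "real ^ 'n" where
  "ones = (\<chi> i. 1)"

definition feasible :: "real \<Rightarrow> ('n \<Rightarrow> ereal) \<Rightarrow> ('n \<Rightarrow> ereal) \<Rightarrow> (real ^ 'n) set" where
  "feasible b l u = {x. ones \<bullet> x = b \<and> (\<forall>i. l i \<le> ereal (x $ i) \<and> ereal (x $ i) \<le> u i)}"

definition inner_j :: "'n::finite \<Rightarrow> real ^ 'n \<Rightarrow> real ^ 'n \<Rightarrow> real" where
  "inner_j j x y = (\<Sum>i\<in>UNIV - {j}. x $ i * y $ i)"

definition norm_j :: "'n::finite \<Rightarrow> real ^ 'n \<Rightarrow> real" where
  "norm_j j x = sqrt (inner_j j x x)"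

end

theory Submission imports Defs begin

lemma line_deriv:
  fixes f :: "real ^ 'n \<Rightarrow> real"
  assumes grad: "\<And>x. (f has_derivative (\<lambda>h. gradf x \<bullet> h)) (at x)"
  shows "((\<lambda>t. f (x + t *\<^sub>R d)) has_real_derivative (gradf (x + t *\<^sub>R d) \<bullet> d)) (at t within S)"
proof -
  have 1: "((\<lambda>t. x + t *\<^sub>R d) has_derivative (\<lambda>h. h *\<^sub>R d)) (at t within S)"
    by (auto intro!: derivative_eq_intros)
  have "((\<lambda>t. f (x + t *\<^sub>R d)) has_derivative (\<lambda>h. gradf (x + t *\<^sub>R d) \<bullet> (h *\<^sub>R d))) (at t within S)"
    using has_derivative_compose[OF 1 grad] by (simp add: o_def)
  moreover have "(\<lambda>h. gradf (x + t *\<^sub>R d) \<bullet> (h *\<^sub>R d)) = (*) (gradf (x + t *\<^sub>R d) \<bullet> d)"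
    by (auto simp: fun_eq_iff)
  ultimately show ?thesis by (simp add: has_field_derivative_def)
qed

lemma line_convex:
  fixes f :: "real ^ 'n \<Rightarrow> real"
  assumes "convex_on UNIV f"
  shows "convex_on UNIV (\<lambda>t. f (x + t *\<^sub>R d))"
proof (rule convex_onI)
  fix u s t :: real assume u: "0 < u" "u < 1"
  have "x + ((1 - u) * s + u * t) *\<^sub>R d = (1 - u) *\<^sub>R (x + s *\<^sub>R d) + u *\<^sub>R (x + t *\<^sub>R d)"
    by (simp add: algebra_simps)
  then show "f (x + ((1 - u) *\<^sub>R s + u *\<^sub>R t) *\<^sub>R d) \<le> (1 - u) * f (x + s *\<^sub>R d) + u * f (x + t *\<^sub>R d)"
    using convex_onD[OF assms, of u "x + s *\<^sub>R d" "x + t *\<^sub>R d"] u by simp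
qed simp

lemma tangent:
  fixes f :: "real ^ 'n \<Rightarrow> real"
  assumes grad: "\<And>x. (f has_derivative (\<lambda>h. gradf x \<bullet> h)) (at x)"
    and cvx: "convex_on UNIV f"
  shows "f z \<ge> f x + gradf x \<bullet> (z - x)"
proof -
  have "(\<lambda>t. f (x + t *\<^sub>R (z - x))) 1 - (\<lambda>t. f (x + t *\<^sub>R (z - x))) 0 \<ge> (gradf (x + 0 *\<^sub>R (z-x)) \<bullet> (z-x)) * (1 - 0)"
    by (rule convex_on_imp_above_tangent[OF line_convex[OF cvx]])
       (use line_deriv[OF grad, of x "z - x" 0 UNIV] in auto)
  then show ?thesis by simp
qed

lemma coord_descent:
  fixes f :: "real ^ 'n \<Rightarrow> real"
  assumes grad: "\<And>x. (f has_derivative (\<lambda>h. gradf x \<bullet> h)) (at x)"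
    and Lip: "\<And>s t. \<bar>gradf (x + s *\<^sub>R d) \<bullet> d - gradf (x + t *\<^sub>R d) \<bullet> d\<bar> \<le> K * \<bar>s - t\<bar>"
  shows "f (x + t *\<^sub>R d) \<le> f x + t * (gradf x \<bullet> d) + K / 2 * t^2"
proof -
  define h where "h t = f (x + t *\<^sub>R d) - f x - t * (gradf x \<bullet> d) - K / 2 * t^2" for t
  have D: "(h has_real_derivative (gradf (x + s *\<^sub>R d) \<bullet> d - gradf x \<bullet> d - K * s)) (at s)" for s
    unfolding h_def
    by (auto intro!: derivative_eq_intros line_deriv[OF grad] simp: power2_eq_square)
  have L0: "\<bar>gradf (x + s *\<^sub>R d) \<bullet> d - gradf x \<bullet> d\<bar> \<le> K * \<bar>s\<bar>" for s
    using Lip[of s 0] by simp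
  have "h t \<le> h 0"
  proof (cases "t \<ge> 0")
    case True
    show ?thesis
    proof (rule DERIV_nonpos_imp_nonincreasing[OF True])
      fix s assume "0 \<le> s" "s \<le> t"
      then show "\<exists>y. DERIV h s :> y \<and> y \<le> 0" using D[of s] L0[of s]
        by (intro exI[of _ "gradf (x + s *\<^sub>R d) \<bullet> d - gradf x \<bullet> d - K * s"]) auto
    qed
  next
    case False
    show ?thesis
    proof (rule DERIV_nonneg_imp_nondecreasing[of t 0 h])
      show "t \<le> 0" using False by simp
      fix s assume "t \<le> s" "s \<le> 0"
      then show "\<exists>y. DERIV h s :> y \<and> y \<ge> 0" using D[of s] L0[of s]
        by (intro exI[of _ "gradf (x + s *\<^sub>R d) \<bullet> d - gradf x \<bullet> d - K * s"]) auto
    qed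
  qed
  then show ?thesis by (simp add: h_def)
qed


lemma decomp:
  fixes h :: "real ^ 'n"
  assumes hs: "(\<Sum>k\<in>UNIV. h $ k) = 0"
  shows "h = (\<Sum>i\<in>UNIV - {j}. (h $ i) *\<^sub>R (axis i 1 - axis j 1))"
proof (subst vec_eq_iff, intro allI)
  fix k
  have hj: "h $ j = - (\<Sum>i\<in>UNIV - {j}. h $ i)"
    using hs sum.remove[of UNIV j "\<lambda>k. h $ k"] by simp
  show "h $ k = (\<Sum>i\<in>UNIV - {j}. (h $ i) *\<^sub>R (axis i 1 - axis j 1)) $ k"
  proof (cases "k = j")
    case True
    have "(\<Sum>i\<in>UNIV - {j}. (h $ i) *\<^sub>R (axis i 1 - axis j 1)) $ k
        = (\<Sum>i\<in>UNIV - {j}. - h $ i)"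
      unfolding sum_component using True by (intro sum.cong) (auto simp: axis_def)
    then show ?thesis using hj True by (simp add: sum_negf)
  next
    case False
    then show ?thesis
    proof -
      have "(\<Sum>i\<in>UNIV - {j}. (h $ i) *\<^sub>R (axis i 1 - axis j 1)) $ k
          = (\<Sum>i\<in>UNIV - {j}. if i = k then h $ i else 0)"
        unfolding sum_component using False by (intro sum.cong) (auto simp: axis_def)
      also have "\<dots> = h $ k" using False by (simp add: sum.delta')
      finally show ?thesis by simp
    qed
  qed
qed

lemma sum_zero_inner:
  fixes G v :: "real ^ 'n"
  assumes "(\<Sum>k\<in>UNIV. v $ k) = 0"
  shows "G \<bullet> v = (\<Sum>k\<in>UNIV - {j}. (G $ k - G $ j) * v $ k)"
proof -
  have vj: "v $ j = - (\<Sum>i\<in>UNIV - {j}. v $ i)"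
    using assms sum.remove[of UNIV j "\<lambda>k. v $ k"] by simp
  have "G \<bullet> v = G $ j * v $ j + (\<Sum>k\<in>UNIV - {j}. G $ k * v $ k)"
    unfolding inner_vec_def using sum.remove[of UNIV j "\<lambda>k. G $ k * v $ k"] by simp
  also have "\<dots> = (\<Sum>k\<in>UNIV - {j}. (G $ k - G $ j) * v $ k)"
    unfolding vj by (simp add: algebra_simps sum_subtractf sum_distrib_left)
  finally show ?thesis .
qed

lemma hyper_descent:
  fixes f :: "real ^ 'n \<Rightarrow> real" and L :: "'n \<Rightarrow> real"
    and gradf :: "real ^ 'n \<Rightarrow> real ^ 'n" and h x :: "real ^ 'n"
  assumes cvx: "convex_on UNIV f"
    and Lpos: "\<And>i. i \<noteq> j \<Longrightarrow> L i > 0"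
    and cd: "\<And>x i t. i \<noteq> j \<Longrightarrow> f (x + t *\<^sub>R (axis i 1 - axis j 1))
              \<le> f x + t * (gradf x \<bullet> (axis i 1 - axis j 1)) + L i / 2 * t^2"
    and J: "UNIV - {j} \<noteq> {}"
    and hs: "(\<Sum>k\<in>UNIV. h $ k) = 0"
  shows "f (x + h) \<le> f x + gradf x \<bullet> h + (\<Sum>i\<in>UNIV-{j}. L i) / 2 * (\<Sum>i\<in>UNIV-{j}. (h $ i)^2)"
proof -
  define J where "J = UNIV - {j}"
  define M where "M = (\<Sum>i\<in>J. L i)"
  define d where "d i = axis i (1::real) - axis j 1" for i :: 'n
  define p where "p i = L i / M" for i
  have Mpos: "M > 0" unfolding M_def J_def using J Lpos by (intro sum_pos) auto
  have pp: "i \<in> J \<Longrightarrow> p i > 0" for i using Lpos Mpos by (auto simp: p_def J_def)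
  have ps: "(\<Sum>i\<in>J. p i) = 1" using Mpos by (simp add: p_def M_def sum_divide_distrib[symmetric])
  have hd: "h = (\<Sum>i\<in>J. (h $ i) *\<^sub>R d i)" unfolding J_def d_def by (rule decomp[OF hs])
  have "(\<Sum>i\<in>J. p i *\<^sub>R (x + (h $ i / p i) *\<^sub>R d i)) = (\<Sum>i\<in>J. p i) *\<^sub>R x + (\<Sum>i\<in>J. (h $ i) *\<^sub>R d i)"
    using pp by (simp add: scaleR_add_right sum.distrib scaleR_sum_left) (auto intro!: sum.cong dest: pp)
  also have "\<dots> = x + h" using ps hd by simp
  finally have eq: "x + h = (\<Sum>i\<in>J. p i *\<^sub>R (x + (h $ i / p i) *\<^sub>R d i))" by simp
  have "f (x + h) \<le> (\<Sum>i\<in>J. p i * f (x + (h $ i / p i) *\<^sub>R d i))"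
    unfolding eq using pp ps J by (intro convex_on_sum[OF _ _ cvx]) (auto simp: J_def less_imp_le)
  also have "\<dots> \<le> (\<Sum>i\<in>J. p i * (f x + (h $ i / p i) * (gradf x \<bullet> d i) + L i / 2 * (h $ i / p i)^2))"
  proof (rule sum_mono)
    fix i assume i: "i \<in> J"
    then have "i \<noteq> j" by (simp add: J_def)
    from cd[OF this, of x "h $ i / p i"]
    have "f (x + (h $ i / p i) *\<^sub>R d i) \<le> f x + (h $ i / p i) * (gradf x \<bullet> d i) + L i / 2 * (h $ i / p i)^2"
      by (simp add: d_def)
    then show "p i * f (x + (h $ i / p i) *\<^sub>R d i) \<le> p i * (f x + (h $ i / p i) * (gradf x \<bullet> d i) + L i / 2 * (h $ i / p i)^2)"
      using pp[OF i] by (intro mult_left_mono) auto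
  qed
  also have "\<dots> = (\<Sum>i\<in>J. p i * f x + (h $ i) * (gradf x \<bullet> d i) + M / 2 * (h $ i)^2)"
  proof (rule sum.cong[OF refl])
    fix i assume "i \<in> J"
    then have "p i > 0" "L i > 0" using pp Lpos by (auto simp: J_def)
    then show "p i * (f x + (h $ i / p i) * (gradf x \<bullet> d i) + L i / 2 * (h $ i / p i)^2)
       = p i * f x + (h $ i) * (gradf x \<bullet> d i) + M / 2 * (h $ i)^2"
      using Mpos by (simp add: p_def field_simps power2_eq_square)
  qed
  also have "\<dots> = f x + gradf x \<bullet> (\<Sum>i\<in>J. (h $ i) *\<^sub>R d i) + M / 2 * (\<Sum>i\<in>J. (h $ i)^2)"
  proof -
    have "(\<Sum>i\<in>J. p i * f x + (h $ i) * (gradf x \<bullet> d i) + M / 2 * (h $ i)^2)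
      = (\<Sum>i\<in>J. p i) * f x + (\<Sum>i\<in>J. (h $ i) * (gradf x \<bullet> d i)) + M / 2 * (\<Sum>i\<in>J. (h $ i)^2)"
      by (simp add: sum.distrib sum_distrib_left sum_distrib_right)
    moreover have "gradf x \<bullet> (\<Sum>i\<in>J. (h $ i) *\<^sub>R d i) = (\<Sum>i\<in>J. (h $ i) * (gradf x \<bullet> d i))"
      by (simp add: inner_sum_right)
    ultimately show ?thesis using ps by simp
  qed
  finally show ?thesis using hd by (simp add: M_def J_def)
qed


lemma cocoerc:
  fixes f :: "real ^ 'n \<Rightarrow> real" and gradf :: "real ^ 'n \<Rightarrow> real ^ 'n"
    and x y :: "real ^ 'n" and M :: real
  assumes grad: "\<And>x. (f has_derivative (\<lambda>h. gradf x \<bullet> h)) (at x)"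
    and cvx: "convex_on UNIV f"
    and desc: "\<And>x h. (\<Sum>k\<in>UNIV. h $ k) = 0 \<Longrightarrow>
        f (x + h) \<le> f x + gradf x \<bullet> h + M / 2 * (\<Sum>i\<in>UNIV-{j}. (h $ i)^2)"
    and Mpos: "M > 0"
  shows "f y \<ge> f x + gradf x \<bullet> (y - x)
     + (\<Sum>k\<in>UNIV-{j}. ((gradf y - gradf x) $ k - (gradf y - gradf x) $ j)^2) / (2 * M)"
proof -
  define G where "G = gradf y - gradf x"
  define a where "a k = G $ k - G $ j" for k
  define S where "S = (\<Sum>k\<in>UNIV-{j}. (a k)^2)"
  define w :: "real ^ 'n" where "w = (\<chi> k. if k = j then - (\<Sum>i\<in>UNIV-{j}. a i) else a k)"
  define hw where "hw = (- (1 / M)) *\<^sub>R w"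
  have wJ: "(\<Sum>k\<in>UNIV-{j}. w $ k) = (\<Sum>k\<in>UNIV-{j}. a k)"
    by (rule sum.cong) (auto simp: w_def)
  have ws: "(\<Sum>k\<in>UNIV. w $ k) = 0"
    using sum.remove[of UNIV j "\<lambda>k. w $ k"] wJ by (simp add: w_def)
  have "(\<Sum>k\<in>UNIV. hw $ k) = - (1 / M) * (\<Sum>k\<in>UNIV. w $ k)"
    by (simp add: hw_def sum_distrib_left)
  then have hs: "(\<Sum>k\<in>UNIV. hw $ k) = 0" using ws by simp
  have "(\<Sum>i\<in>UNIV-{j}. (hw $ i)^2) = (\<Sum>i\<in>UNIV-{j}. (a i)^2 / M^2)"
    by (rule sum.cong) (auto simp: hw_def w_def power_divide power_mult_distrib)
  then have hsq: "(\<Sum>i\<in>UNIV-{j}. (hw $ i)^2) = S / M^2"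
    by (simp add: S_def sum_divide_distrib)
  have "G \<bullet> w = (\<Sum>k\<in>UNIV - {j}. (G $ k - G $ j) * w $ k)"
    by (rule sum_zero_inner[OF ws])
  also have "\<dots> = S" unfolding S_def
    by (rule sum.cong) (auto simp: w_def a_def power2_eq_square)
  finally have Gw: "G \<bullet> w = S" .
  have d1: "f (y + hw) \<le> f y + gradf y \<bullet> hw + M / 2 * (S / M^2)"
    using desc[OF hs, of y] hsq by simp
  have t1: "f (y + hw) \<ge> f x + gradf x \<bullet> (y + hw - x)"
    by (rule tangent[OF grad cvx])
  have "gradf y \<bullet> hw - gradf x \<bullet> hw = G \<bullet> hw" by (simp add: G_def inner_diff_left)
  also have "\<dots> = - (1 / M) * S" using Gw by (simp add: hw_def)
  finally have gh: "gradf y \<bullet> hw - gradf x \<bullet> hw = - (S / M)" by simp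
  have e1: "M / 2 * (S / M^2) = S / (2 * M)" using Mpos by (simp add: field_simps power2_eq_square)
  have e2: "S / M - S / (2 * M) = S / (2 * M)" using Mpos by (simp add: field_simps)
  have e3: "gradf x \<bullet> (y + hw - x) = gradf x \<bullet> (y - x) + gradf x \<bullet> hw"
    by (simp add: inner_add_right inner_diff_right)
  have "f y \<ge> f x + gradf x \<bullet> (y - x) + S / (2 * M)"
    using d1 t1 gh e1 e2 e3 by linarith
  then show ?thesis by (simp add: S_def a_def G_def)
qed

theorem lemma3:
  fixes f :: "real ^ 'n \<Rightarrow> real"
    and gradf :: "real ^ 'n \<Rightarrow> real ^ 'n"
    and L :: "'n \<Rightarrow> 'n \<Rightarrow> real"
    and b :: real and l u :: "'n \<Rightarrow> ereal"
  assumes n2: "CARD('n) \<ge> 2"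
    and lu: "\<And>i. l i < u i" "\<And>i. l i \<noteq> \<infinity>" "\<And>i. u i \<noteq> -\<infinity>"
    and grad: "\<And>x. (f has_derivative (\<lambda>h. gradf x \<bullet> h)) (at x)"
    and lip: "\<exists>K. \<forall>x y. norm (gradf x - gradf y) \<le> K * norm (x - y)"
    and Lpos: "\<And>i j. i \<noteq> j \<Longrightarrow> L i j > 0"
    and Ldiag: "\<And>i. L i i = 0"
    and Lij: "\<And>i j x s t. i \<noteq> j \<Longrightarrow>
        \<bar>gradf (x + s *\<^sub>R (axis i 1 - axis j 1)) \<bullet> (axis i 1 - axis j 1)
         - gradf (x + t *\<^sub>R (axis i 1 - axis j 1)) \<bullet> (axis i 1 - axis j 1)\<bar>
        \<le> L i j * \<bar>s - t\<bar>"
    and cvx: "convex_on UNIV f"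
    and x1: "x' \<in> feasible b l u" and x2: "x'' \<in> feasible b l u"
  shows "norm_j j ((gradf x' - (gradf x' $ j) *\<^sub>R ones) - (gradf x'' - (gradf x'' $ j) *\<^sub>R ones))
           \<le> (\<Sum>i\<in>UNIV. L i j) * norm_j j (x' - x'')"
  proof -
  define M where "M = (\<Sum>i\<in>UNIV-{j}. L i j)"
  have Msum: "(\<Sum>i\<in>UNIV. L i j) = M"
    using sum.remove[of UNIV j "\<lambda>i. L i j"] Ldiag by (simp add: M_def)
  have Jne: "UNIV - {j} \<noteq> {}"
  proof
    assume "UNIV - {j} = {}"
    then have "(UNIV :: 'n set) = {j}" by auto
    then have "card (UNIV :: 'n set) = card {j}" by (rule arg_cong)
    then have "CARD('n) = 1" by simp
    then show False using n2 by simp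
  qed
  have Lp: "\<And>i. i \<noteq> j \<Longrightarrow> L i j > 0" using Lpos by auto
  have Mpos: "M > 0" unfolding M_def using Jne Lp by (intro sum_pos) auto
  have cd: "f (x + t *\<^sub>R (axis i 1 - axis j 1))
      \<le> f x + t * (gradf x \<bullet> (axis i 1 - axis j 1)) + L i j / 2 * t^2" if "i \<noteq> j" for x i t
    using coord_descent[OF grad Lij[OF that]] by simp
  have desc: "f (x + h) \<le> f x + gradf x \<bullet> h + M / 2 * (\<Sum>i\<in>UNIV-{j}. (h $ i)^2)"
    if hs: "(\<Sum>k\<in>UNIV. h $ k) = 0" for x h
    using hyper_descent[of f j "\<lambda>i. L i j" gradf h x, OF cvx Lp cd Jne hs] unfolding M_def by simp
  define v where "v = x' - x''"
  have "ones \<bullet> x' = b" "ones \<bullet> x'' = b" using x1 x2 by (auto simp: feasible_def)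
  then have hv: "(\<Sum>k\<in>UNIV. v $ k) = 0"
    by (simp add: v_def ones_def inner_vec_def sum_subtractf)
  define G where "G = gradf x' - gradf x''"
  define a where "a k = G $ k - G $ j" for k
  define S where "S = (\<Sum>k\<in>UNIV-{j}. (a k)^2)"
  define V where "V = (\<Sum>k\<in>UNIV-{j}. (v $ k)^2)"
  define P where "P = (\<Sum>k\<in>UNIV-{j}. a k * v $ k)"
  have c1: "f x' \<ge> f x'' + gradf x'' \<bullet> (x' - x'') + S / (2 * M)"
    using cocoerc[OF grad cvx desc Mpos, where x=x'' and y=x'] by (simp add: S_def a_def G_def)
  have "(\<Sum>k\<in>UNIV-{j}. ((gradf x'' - gradf x') $ k - (gradf x'' - gradf x') $ j)^2) = S"
    unfolding S_def
  proof (rule sum.cong[OF refl])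
    fix k
    have "(gradf x'' - gradf x') $ k - (gradf x'' - gradf x') $ j = - a k" by (simp add: a_def G_def)
    then show "((gradf x'' - gradf x') $ k - (gradf x'' - gradf x') $ j)^2 = (a k)^2" by simp
  qed
  then have c2: "f x'' \<ge> f x' + gradf x' \<bullet> (x'' - x') + S / (2 * M)"
    using cocoerc[OF grad cvx desc Mpos, where x=x' and y=x''] by simp
  have i1: "gradf x' \<bullet> (x'' - x') = - (gradf x' \<bullet> v)" by (simp add: v_def inner_diff_right)
  have i2: "G \<bullet> v = gradf x' \<bullet> v - gradf x'' \<bullet> v" by (simp add: G_def inner_diff_left)
  have e: "S / (2 * M) + S / (2 * M) = S / M" using Mpos by (simp add: field_simps)
  have Sle: "S / M \<le> G \<bullet> v" using c1 c2 i1 i2 e by (simp add: v_def) 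
  have GP: "G \<bullet> v = P" unfolding P_def a_def by (rule sum_zero_inner[OF hv])
  have SMP: "S \<le> M * P" using Sle GP Mpos by (simp add: divide_le_eq mult.commute)
  have S0: "S \<ge> 0" unfolding S_def by (intro sum_nonneg) auto
  have V0: "V \<ge> 0" unfolding V_def by (intro sum_nonneg) auto
  have CS: "P^2 \<le> S * V" unfolding P_def S_def V_def by (rule Cauchy_Schwarz_ineq_sum)
  have "S^2 \<le> (M * P)^2" using SMP S0 by (intro power_mono) auto
  also have "\<dots> = M^2 * P^2" by (simp add: power_mult_distrib)
  also have "\<dots> \<le> M^2 * (S * V)" using CS by (intro mult_left_mono) auto
  finally have S2: "S^2 \<le> M^2 * (S * V)" .
  have SV: "S \<le> M^2 * V"
  proof (cases "S = 0")
    case True then show ?thesis using V0 by simp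
  next
    case False
    then have "S > 0" using S0 by simp
    moreover have "S * S \<le> S * (M^2 * V)" using S2 by (simp add: power2_eq_square algebra_simps)
    ultimately show ?thesis by simp
  qed
  have "sqrt S \<le> sqrt (M^2 * V)" using SV by simp
  also have "\<dots> = M * sqrt V" using Mpos by (simp add: real_sqrt_mult)
  finally have fin: "sqrt S \<le> M * sqrt V" .
  have nT: "norm_j j ((gradf x' - (gradf x' $ j) *\<^sub>R ones) - (gradf x'' - (gradf x'' $ j) *\<^sub>R ones)) = sqrt S"
    unfolding norm_j_def inner_j_def S_def
    by (rule arg_cong[where f=sqrt], rule sum.cong) (auto simp: a_def G_def ones_def power2_eq_square algebra_simps)
  have nv: "norm_j j (x' - x'') = sqrt V"
    unfolding norm_j_def inner_j_def V_def v_def by (simp add: power2_eq_square)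
  show ?thesis using fin nT nv Msum by simp
qed

end
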